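(* Let $\langle m;\Delta\rangle$ be a balanced ball (which is a number), where $m=\frac{a}{2^p}\neq 0$ with $a$ an odd integer and $p\ge 0$ an integer, or with $p=0$ and $a$ any nonzero integer. Then $-\frac{1}{2^p}\le\Delta<0$.
   Context: Games are short normal-play combinatorial games; a number is a game $G$ with $G^L<G<G^R$ for all options, and short number values are identified with dyadic rationals $\frac{a}{2^p}$. For numbers $m,\Delta$, the ball $\langle m;\Delta\rangle$ is the game $\{x\mid y\}$ where $x,y$ are the canonical forms of $m+\Delta$ and $m-\Delta$; balls are only considered when they are numbers, which forces $\Delta<0$. A ball is balanced if $\langle m;\Delta\rangle+\langle m;\Delta\rangle=m+m$ (disjunctive sum, equality of values). *)

theory Defs
  imports Complex_Main
begin

text \<open>A short game is given by finite lists of Left and Right options.\<close>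
datatype game = G "game list" "game list"

lemma size_opt_less:
  "x \<in> set xs \<Longrightarrow> size x < Suc (size_list size xs + size_list size ys)"
  "x \<in> set ys \<Longrightarrow> size x < Suc (size_list size xs + size_list size ys)"
  by (auto dest: size_list_estimation'[of _ _ _ size, OF _ order_refl])

function game_le :: "game \<Rightarrow> game \<Rightarrow> bool" where
  "game_le (G gl gr) (G hl hr) \<longleftrightarrow>
     (\<forall>x\<in>set gl. \<not> game_le (G hl hr) x) \<and> (\<forall>y\<in>set hr. \<not> game_le y (G gl gr))"
  by pat_completeness auto
termination
  by (relation "measure (\<lambda>(g,h). size g + size h)")
     (auto dest: size_opt_less)

definition game_eq :: "game \<Rightarrow> game \<Rightarrow> bool" where
  "game_eq g h \<longleftrightarrow> game_le g h \<and> game_le h g"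

definition game_less :: "game \<Rightarrow> game \<Rightarrow> bool" where
  "game_less g h \<longleftrightarrow> game_le g h \<and> \<not> game_le h g"

function game_add :: "game \<Rightarrow> game \<Rightarrow> game" where
  "game_add (G al ar) (G bl br) =
     G (map (\<lambda>x. game_add x (G bl br)) al @ map (\<lambda>y. game_add (G al ar) y) bl)
       (map (\<lambda>x. game_add x (G bl br)) ar @ map (\<lambda>y. game_add (G al ar) y) br)"
  by pat_completeness auto
termination
  by (relation "measure (\<lambda>(g,h). size g + size h)")
     (auto dest: size_opt_less)

fun game_neg :: "game \<Rightarrow> game" where
  "game_neg (G gl gr) = G (map game_neg gr) (map game_neg gl)"

definition is_number :: "game \<Rightarrow> bool" where
  "is_number g \<longleftrightarrow> (case g of G gl gr \<Rightarrow>
      (\<forall>x\<in>set gl. game_less x g) \<and> (\<forall>y\<in>set gr. game_less g y))"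

fun canon_nat :: "nat \<Rightarrow> game" where
  "canon_nat 0 = G [] []"
| "canon_nat (Suc k) = G [canon_nat k] []"

definition canon_int :: "int \<Rightarrow> game" where
  "canon_int n = (if n \<ge> 0 then canon_nat (nat n) else game_neg (canon_nat (nat (- n))))"

text \<open>Canonical form of b/2^q: if b is odd and q \<ge> 1, it is
  {(b-1)/2^q | (b+1)/2^q}; if b is even we reduce the fraction.\<close>
fun canon_dy :: "int \<Rightarrow> nat \<Rightarrow> game" where
  "canon_dy b 0 = canon_int b"
| "canon_dy b (Suc q) =
     (if even b then canon_dy (b div 2) q
      else G [canon_dy ((b - 1) div 2) q] [canon_dy ((b + 1) div 2) q])"

definition is_dyadic :: "rat \<Rightarrow> bool" where
  "is_dyadic r \<longleftrightarrow> (\<exists>(b::int) (q::nat). r = of_int b / 2 ^ q)"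

definition dyadic_exp :: "rat \<Rightarrow> nat" where
  "dyadic_exp r = (LEAST q::nat. \<exists>b::int. r = of_int b / 2 ^ q)"

text \<open>Canonical form of a dyadic rational (meaningful only for dyadic r).\<close>
definition canon :: "rat \<Rightarrow> game" where
  "canon r = canon_dy \<lfloor>r * 2 ^ dyadic_exp r\<rfloor> (dyadic_exp r)"

definition ball :: "rat \<Rightarrow> rat \<Rightarrow> game" where
  "ball m \<Delta> = G [canon (m + \<Delta>)] [canon (m - \<Delta>)]"

definition balanced :: "rat \<Rightarrow> rat \<Rightarrow> bool" where
  "balanced m \<Delta> \<longleftrightarrow>
     game_eq (game_add (ball m \<Delta>) (ball m \<Delta>)) (game_add (canon m) (canon m))"

end

theory Submission
  imports Defs
begin


definition In :: "nat \<Rightarrow> rat \<Rightarrow> bool" where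
  "In k r \<longleftrightarrow> (\<exists>b::int. r = of_int b / 2 ^ k)"

lemma dyadic_In: "is_dyadic r \<longleftrightarrow> (\<exists>k. In k r)"
  by (auto simp: is_dyadic_def In_def)

lemma dexp_In: "is_dyadic r \<Longrightarrow> In (dyadic_exp r) r"
  unfolding dyadic_exp_def In_def is_dyadic_def
  by (rule LeastI_ex) auto

lemma dexp_le: "In k r \<Longrightarrow> dyadic_exp r \<le> k"
  unfolding dyadic_exp_def In_def
  by (rule Least_le) auto

lemma In_mono: assumes "In k r" "k \<le> j" shows "In j r"
proof -
  obtain b where b: "r = of_int b / 2 ^ k" using assms(1) by (auto simp: In_def)
  have "(2::rat) ^ j = 2 ^ k * 2 ^ (j - k)" using assms(2) by (simp add: power_add[symmetric])
  then have "r = of_int (b * 2 ^ (j - k)) / 2 ^ j" using b by simp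
  then show ?thesis unfolding In_def by blast
qed

lemma In_int_eq: assumes "of_int b / (2::rat) ^ k = of_int c / 2 ^ k" shows "b = c"
  using assms by simp

lemma dexp_of_odd: assumes "odd b" shows "dyadic_exp (of_int b / 2 ^ q) = q"
proof -
  have le: "dyadic_exp (of_int b / 2 ^ q) \<le> q" by (rule dexp_le) (auto simp: In_def)
  show ?thesis
  proof (rule ccontr)
    assume "dyadic_exp (of_int b / 2 ^ q) \<noteq> q"
    then have lt: "dyadic_exp (of_int b / 2 ^ q) < q" using le by simp
    have "In (dyadic_exp (of_int b / 2 ^ q)) (of_int b / 2 ^ q)"
      by (rule dexp_In) (auto simp: is_dyadic_def)
    then obtain c where c: "of_int b / (2::rat) ^ q = of_int c / 2 ^ (dyadic_exp (of_int b / 2 ^ q))"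
      by (auto simp: In_def)
    define e where "e = dyadic_exp (of_int b / (2::rat) ^ q)"
    have c': "of_int b / (2::rat) ^ q = of_int c / 2 ^ e" using c e_def by simp
    have "(2::rat) ^ q = 2 ^ e * 2 ^ (q - e)" using lt e_def by (simp add: power_add[symmetric])
    then have "of_int b = (of_int (c * 2 ^ (q - e)) :: rat)" using c'
      by (simp add: field_simps)
    then have "b = c * 2 ^ (q - e)" by (simp only: of_int_eq_iff)
    moreover have "q - e > 0" using lt e_def by simp
    ultimately have "even b" by simp
    then show False using assms by simp
  qed
qed

lemma dexp_int: "dyadic_exp (of_int n) = 0"
  using dexp_le[of 0 "of_int n"] by (auto simp: In_def)

lemma dexp_odd: assumes "is_dyadic r" "dyadic_exp r = Suc k" "r = of_int b / 2 ^ Suc k"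
  shows "odd b"
proof
  assume "even b"
  then obtain c where "b = 2 * c" by blast
  then have "r = of_int c / 2 ^ k" using assms(3) by simp
  then have "dyadic_exp r \<le> k" by (intro dexp_le) (auto simp: In_def)
  then show False using assms(2) by simp
qed

lemma floor_In: "\<lfloor>(of_int b / 2 ^ k :: rat) * 2 ^ k\<rfloor> = b"
  by simp



definition lvals :: "rat \<Rightarrow> rat list" where
  "lvals r = (if 0 < dyadic_exp r \<or> r > 0 then [r - 1 / 2 ^ dyadic_exp r] else [])"
definition rvals :: "rat \<Rightarrow> rat list" where
  "rvals r = (if 0 < dyadic_exp r \<or> r < 0 then [r + 1 / 2 ^ dyadic_exp r] else [])"

lemma canon_int_struct:
  "canon_int n = G (if n > 0 then [canon_int (n - 1)] else [])
                   (if n < 0 then [canon_int (n + 1)] else [])"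
proof (cases "n > 0")
  case True
  then have "nat n = Suc (nat (n - 1))" by simp
  then show ?thesis using True by (simp add: canon_int_def)
next
  case False
  show ?thesis
  proof (cases "n = 0")
    case True then show ?thesis by (simp add: canon_int_def)
  next
    case F2: False
    then have n: "n < 0" using False by simp
    then have "nat (- n) = Suc (nat (- n - 1))" by simp
    then show ?thesis using n by (auto simp: canon_int_def)
  qed
qed

lemma canon_of_int: "canon (of_int n) = canon_int n"
  by (simp add: canon_def dexp_int)

lemma canon_dy_eq: "canon_dy c j = canon (of_int c / 2 ^ j)"
proof (induction j arbitrary: c)
  case 0
  then show ?case by (simp add: canon_of_int)
next
  case (Suc j)
  show ?case
  proof (cases "even c")
    case True
    then obtain d where d: "c = 2 * d" by blast
    have "canon_dy c (Suc j) = canon_dy d j" using d by simp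
    also have "\<dots> = canon (of_int d / 2 ^ j)" by (rule Suc.IH)
    also have "of_int d / 2 ^ j = (of_int c / 2 ^ Suc j :: rat)" using d by simp
    finally show ?thesis .
  next
    case False
    have e: "dyadic_exp (of_int c / 2 ^ Suc j :: rat) = Suc j" using False by (rule dexp_of_odd)
    have "canon (of_int c / 2 ^ Suc j) = canon_dy \<lfloor>(of_int c / 2 ^ Suc j :: rat) * 2 ^ Suc j\<rfloor> (Suc j)"
      unfolding canon_def e ..
    also have "\<lfloor>(of_int c / 2 ^ Suc j :: rat) * 2 ^ Suc j\<rfloor> = c" by (rule floor_In)
    finally show ?thesis by simp
  qed
qed

lemma canon_struct:
  assumes "is_dyadic r"
  shows "canon r = G (map canon (lvals r)) (map canon (rvals r))"
proof -
  define k where "k = dyadic_exp r"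
  obtain b where b: "r = of_int b / 2 ^ k" using dexp_In[OF assms] by (auto simp: In_def k_def)
  have "canon r = canon_dy \<lfloor>r * 2 ^ k\<rfloor> k" by (simp add: canon_def k_def)
  also have "\<lfloor>r * 2 ^ k\<rfloor> = b" using b floor_In by simp
  finally have cr: "canon r = canon_dy b k" .
  show ?thesis
  proof (cases k)
    case 0
    then have r: "r = of_int b" using b by simp
    have "canon r = canon_int b" using cr 0 by simp
    also have "\<dots> = G (if b > 0 then [canon_int (b - 1)] else [])
                   (if b < 0 then [canon_int (b + 1)] else [])" by (rule canon_int_struct)
    also have "\<dots> = G (map canon (lvals r)) (map canon (rvals r))"
    proof -
      have c1: "canon (of_int b - 1) = canon_int (b - 1)" using canon_of_int[of "b - 1"] by simp
      have c2: "canon (of_int b + 1) = canon_int (b + 1)" using canon_of_int[of "b + 1"] by simp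
      show ?thesis using r by (simp add: lvals_def rvals_def dexp_int c1 c2)
    qed
    finally show ?thesis .
  next
    case (Suc j)
    have e: "dyadic_exp r = Suc j" using Suc by (simp add: k_def)
    have "r = of_int b / 2 ^ Suc j" using b Suc by simp
    then have odd: "odd b" using dexp_odd[OF assms e] by blast
    have "canon r = G [canon_dy ((b - 1) div 2) j] [canon_dy ((b + 1) div 2) j]"
      using cr Suc odd by simp
    moreover have "of_int ((b - 1) div 2) / 2 ^ j = r - 1 / 2 ^ k"
    proof -
      obtain d where d: "b = 2 * d + 1" using odd oddE by blast
      show ?thesis using d b Suc by (simp add: field_simps)
    qed
    moreover have "of_int ((b + 1) div 2) / 2 ^ j = r + 1 / 2 ^ k"
    proof -
      obtain d where d: "b = 2 * d + 1" using odd oddE by blast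
      have "(b + 1) div 2 = d + 1" using d by simp
      then show ?thesis using d b Suc by (simp add: field_simps)
    qed
    ultimately show ?thesis using Suc
      by (simp add: lvals_def rvals_def k_def[symmetric] canon_dy_eq)
  qed
qed



fun lo :: "game \<Rightarrow> game list" where "lo (G l r) = l"
fun ro :: "game \<Rightarrow> game list" where "ro (G l r) = r"

lemma G_lo_ro: "G (lo a) (ro a) = a" by (cases a) auto

lemma le_iff: "game_le a b \<longleftrightarrow> (\<forall>x\<in>set (lo a). \<not> game_le b x) \<and> (\<forall>y\<in>set (ro b). \<not> game_le y a)"
  by (cases a; cases b) auto

lemma size_lo: "x \<in> set (lo a) \<Longrightarrow> size x < size a"
  by (cases a) (auto dest: size_opt_less)
lemma size_ro: "x \<in> set (ro a) \<Longrightarrow> size x < size a"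
  by (cases a) (auto dest: size_opt_less)

lemma le_refl: "game_le g g"
proof (induction g)
  case (G l r)
  show ?case
  proof (subst le_iff, intro conjI ballI notI)
    fix x assume x: "x \<in> set (lo (G l r))" and h: "game_le (G l r) x"
    have "game_le x x" using G.IH(1) x by simp
    then show False using h x by (subst (asm) le_iff) auto
  next
    fix y assume y: "y \<in> set (ro (G l r))" and h: "game_le y (G l r)"
    have "game_le y y" using G.IH(2) y by simp
    then show False using h y by (subst (asm) le_iff) auto
  qed
qed

lemma lopt: "x \<in> set (lo a) \<Longrightarrow> \<not> game_le a x"
  using le_refl[of x] by (subst le_iff) auto
lemma ropt: "y \<in> set (ro a) \<Longrightarrow> \<not> game_le y a"
  using le_refl[of y] by (subst le_iff) auto

lemma le_trans: "game_le a b \<Longrightarrow> game_le b c \<Longrightarrow> game_le a c"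
proof (induction "size a + size b + size c" arbitrary: a b c rule: less_induct)
  case less
  show ?case
  proof (subst le_iff, intro conjI ballI notI)
    fix x assume x: "x \<in> set (lo a)" and cx: "game_le c x"
    have "size x < size a" using size_lo[OF x] .
    then have "game_le b x" using less.hyps[of b c x] less.prems(2) cx by simp
    then show False using less.prems(1) x by (subst (asm) le_iff) auto
  next
    fix y assume y: "y \<in> set (ro c)" and ya: "game_le y a"
    have "size y < size c" using size_ro[OF y] .
    then have "game_le y b" using less.hyps[of y a b] less.prems(1) ya by simp
    then show False using less.prems(2) y by (subst (asm) le_iff) auto
  qed
qed

lemma lo_add: "lo (game_add a b) = map (\<lambda>x. game_add x b) (lo a) @ map (game_add a) (lo b)"
  by (cases a; cases b) simp
lemma ro_add: "ro (game_add a b) = map (\<lambda>x. game_add x b) (ro a) @ map (game_add a) (ro b)"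
  by (cases a; cases b) simp

lemma mono_R: "game_le H K \<longleftrightarrow> game_le (game_add H X) (game_add K X)"
proof (induction "size H + size K + size X" arbitrary: H K X rule: less_induct)
  case less
  have IH: "game_le A B \<longleftrightarrow> game_le (game_add A Y) (game_add B Y)"
    if "size A + size B + size Y < size H + size K + size X" for A B Y
    using less.hyps that by blast
  have e1: "game_le (game_add K X) (game_add x X) \<longleftrightarrow> game_le K x" if "x \<in> set (lo H)" for x
    using IH[of K x X] size_lo[OF that] by simp
  have e2: "game_le (game_add x X) (game_add H X) \<longleftrightarrow> game_le x H" if "x \<in> set (ro K)" for x
    using IH[of x H X] size_ro[OF that] by simp
  have f1: "\<not> game_le (game_add K X) (game_add H y)" if "game_le H K" "y \<in> set (lo X)" for y
  proof
    assume a: "game_le (game_add K X) (game_add H y)"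
    have "game_le (game_add H y) (game_add K y)"
      using IH[of H K y] size_lo[OF that(2)] that(1) by simp
    then have "game_le (game_add K X) (game_add K y)" using a le_trans by blast
    moreover have "game_add K y \<in> set (lo (game_add K X))" using that(2) by (simp add: lo_add)
    ultimately show False using lopt by blast
  qed
  have f2: "\<not> game_le (game_add K y) (game_add H X)" if "game_le H K" "y \<in> set (ro X)" for y
  proof
    assume a: "game_le (game_add K y) (game_add H X)"
    have "game_le (game_add H y) (game_add K y)"
      using IH[of H K y] size_ro[OF that(2)] that(1) by simp
    then have "game_le (game_add H y) (game_add H X)" using a le_trans by blast
    moreover have "game_add H y \<in> set (ro (game_add H X))" using that(2) by (simp add: ro_add)
    ultimately show False using ropt by blast
  qed
  have L: "game_le H K \<longleftrightarrow> (\<forall>x\<in>set (lo H). \<not> game_le K x) \<and> (\<forall>y\<in>set (ro K). \<not> game_le y H)"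
    by (rule le_iff)
  have R: "game_le (game_add H X) (game_add K X) \<longleftrightarrow> (\<forall>x\<in>set (lo (game_add H X)). \<not> game_le (game_add K X) x) \<and> (\<forall>y\<in>set (ro (game_add K X)). \<not> game_le y (game_add H X))"
    by (rule le_iff)
  show ?case
  proof
    assume hk: "game_le H K"
    show "game_le (game_add H X) (game_add K X)" unfolding R lo_add ro_add using hk f1 f2 e1 e2 L by auto
  next
    assume "game_le (game_add H X) (game_add K X)"
    then show "game_le H K" unfolding R lo_add ro_add using e1 e2 L by auto
  qed
qed

lemma mono_L: "game_le H K \<longleftrightarrow> game_le (game_add X H) (game_add X K)"
proof (induction "size H + size K + size X" arbitrary: H K X rule: less_induct)
  case less
  have IH: "game_le A B \<longleftrightarrow> game_le (game_add Y A) (game_add Y B)"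
    if "size A + size B + size Y < size H + size K + size X" for A B Y
    using less.hyps that by blast
  have e1: "game_le (game_add X K) (game_add X x) \<longleftrightarrow> game_le K x" if "x \<in> set (lo H)" for x
    using IH[of K x X] size_lo[OF that] by simp
  have e2: "game_le (game_add X x) (game_add X H) \<longleftrightarrow> game_le x H" if "x \<in> set (ro K)" for x
    using IH[of x H X] size_ro[OF that] by simp
  have f1: "\<not> game_le (game_add X K) (game_add y H)" if "game_le H K" "y \<in> set (lo X)" for y
  proof
    assume a: "game_le (game_add X K) (game_add y H)"
    have "game_le (game_add y H) (game_add y K)"
      using IH[of H K y] size_lo[OF that(2)] that(1) by simp
    then have "game_le (game_add X K) (game_add y K)" using a le_trans by blast
    moreover have "game_add y K \<in> set (lo (game_add X K))" using that(2) by (simp add: lo_add)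
    ultimately show False using lopt by blast
  qed
  have f2: "\<not> game_le (game_add y K) (game_add X H)" if "game_le H K" "y \<in> set (ro X)" for y
  proof
    assume a: "game_le (game_add y K) (game_add X H)"
    have "game_le (game_add y H) (game_add y K)"
      using IH[of H K y] size_ro[OF that(2)] that(1) by simp
    then have "game_le (game_add y H) (game_add X H)" using a le_trans by blast
    moreover have "game_add y H \<in> set (ro (game_add X H))" using that(2) by (simp add: ro_add)
    ultimately show False using ropt by blast
  qed
  have L: "game_le H K \<longleftrightarrow> (\<forall>x\<in>set (lo H). \<not> game_le K x) \<and> (\<forall>y\<in>set (ro K). \<not> game_le y H)"
    by (rule le_iff)
  have R: "game_le (game_add X H) (game_add X K) \<longleftrightarrow> (\<forall>x\<in>set (lo (game_add X H)). \<not> game_le (game_add X K) x) \<and> (\<forall>y\<in>set (ro (game_add X K)). \<not> game_le y (game_add X H))"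
    by (rule le_iff)
  show ?case
  proof
    assume hk: "game_le H K"
    show "game_le (game_add X H) (game_add X K)" unfolding R lo_add ro_add using hk f1 f2 e1 e2 L by auto
  next
    assume "game_le (game_add X H) (game_add X K)"
    then show "game_le H K" unfolding R lo_add ro_add using e1 e2 L by auto
  qed
qed



lemma In_dyadic: "In k r \<Longrightarrow> is_dyadic r"
  using dyadic_In by blast

lemma In_pm: assumes "In k r" shows "In k (r - 1 / 2 ^ k)" "In k (r + 1 / 2 ^ k)"
proof -
  obtain b where b: "r = of_int b / 2 ^ k" using assms by (auto simp: In_def)
  have "r - 1 / 2 ^ k = of_int (b - 1) / 2 ^ k" using b by (simp add: diff_divide_distrib)
  then show "In k (r - 1 / 2 ^ k)" unfolding In_def by blast
  have "r + 1 / 2 ^ k = of_int (b + 1) / 2 ^ k" using b by (simp add: add_divide_distrib)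
  then show "In k (r + 1 / 2 ^ k)" unfolding In_def by blast
qed

lemma lvals_props: assumes "is_dyadic r" "l \<in> set (lvals r)"
  shows "is_dyadic l" "l < r" "In (dyadic_exp r) l"
  using assms In_pm(1)[OF dexp_In[OF assms(1)]] by (auto simp: lvals_def split: if_splits intro: In_dyadic)

lemma rvals_props: assumes "is_dyadic r" "l \<in> set (rvals r)"
  shows "is_dyadic l" "r < l" "In (dyadic_exp r) l"
  using assms In_pm(2)[OF dexp_In[OF assms(1)]] by (auto simp: rvals_def split: if_splits intro: In_dyadic)

lemma step_down: assumes "of_int c / 2 ^ k < of_int b / (2::rat) ^ k"
  shows "of_int c / 2 ^ k \<le> of_int b / (2::rat) ^ k - 1 / 2 ^ k"
proof -
  have "c < b" using assms by (simp add: divide_less_cancel)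
  then have "of_int c \<le> (of_int b - 1 :: rat)" by linarith
  then have "of_int c / 2 ^ k \<le> (of_int b - 1) / (2::rat) ^ k" by (simp add: divide_right_mono)
  then show ?thesis by (simp add: diff_divide_distrib)
qed

lemma step_up: assumes "of_int c / 2 ^ k < of_int b / (2::rat) ^ k"
  shows "of_int c / 2 ^ k + 1 / 2 ^ k \<le> of_int b / (2::rat) ^ k"
  using step_down[OF assms] by simp

lemma noninterleave:
  assumes r: "is_dyadic r" and s: "is_dyadic s" and sr: "s < r"
  shows "(\<exists>l\<in>set (lvals r). s \<le> l) \<or> (\<exists>u\<in>set (rvals s). u \<le> r)"
proof -
  define er where "er = dyadic_exp r"
  define es where "es = dyadic_exp s"
  have Ir: "In er r" using dexp_In[OF r] er_def by simp
  have Is: "In es s" using dexp_In[OF s] es_def by simp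
  consider "er > 0" "es \<le> er" | "es > 0" "er < es" | "er = 0" "es = 0" by linarith
  then show ?thesis
  proof cases
    case 1
    obtain b where b: "r = of_int b / 2 ^ er" using Ir by (auto simp: In_def)
    obtain c where c: "s = of_int c / 2 ^ er" using In_mono[OF Is 1(2)] by (auto simp: In_def)
    have "s \<le> r - 1 / 2 ^ er" using step_down[of c er b] sr b c by simp
    moreover have "lvals r = [r - 1 / 2 ^ er]" using 1 by (simp add: lvals_def er_def)
    ultimately show ?thesis by simp
  next
    case 2
    obtain b where b: "r = of_int b / 2 ^ es" using In_mono[OF Ir] 2(2) by (force simp: In_def)
    obtain c where c: "s = of_int c / 2 ^ es" using Is by (auto simp: In_def)
    have "s + 1 / 2 ^ es \<le> r" using step_up[of c es b] sr b c by simp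
    moreover have "rvals s = [s + 1 / 2 ^ es]" using 2 by (simp add: rvals_def es_def)
    ultimately show ?thesis by simp
  next
    case 3
    obtain b where b: "r = of_int b" using Ir 3 by (auto simp: In_def)
    obtain c where c: "s = of_int c" using Is 3 by (auto simp: In_def)
    have cb: "c < b" using sr b c by simp
    show ?thesis
    proof (cases "r > 0")
      case True
      then have "lvals r = [r - 1]" using 3 by (simp add: lvals_def er_def)
      moreover have "s \<le> r - 1" using cb b c by simp
      ultimately show ?thesis by simp
    next
      case False
      then have "s < 0" using sr by simp
      then have "rvals s = [s + 1]" using 3 by (simp add: rvals_def es_def)
      moreover have "s + 1 \<le> r" using cb b c by simp
      ultimately show ?thesis by simp
    qed
  qed
qed

lemma lo_canon: "is_dyadic r \<Longrightarrow> lo (canon r) = map canon (lvals r)"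
  by (subst canon_struct) auto
lemma ro_canon: "is_dyadic r \<Longrightarrow> ro (canon r) = map canon (rvals r)"
  by (subst canon_struct) auto

lemma size_lcanon: "is_dyadic r \<Longrightarrow> l \<in> set (lvals r) \<Longrightarrow> size (canon l) < size (canon r)"
  using size_lo[of "canon l" "canon r"] lo_canon by simp
lemma size_rcanon: "is_dyadic r \<Longrightarrow> l \<in> set (rvals r) \<Longrightarrow> size (canon l) < size (canon r)"
  using size_ro[of "canon l" "canon r"] ro_canon by simp

theorem VC: "is_dyadic r \<Longrightarrow> is_dyadic s \<Longrightarrow> game_le (canon r) (canon s) \<longleftrightarrow> r \<le> s"
proof (induction "size (canon r) + size (canon s)" arbitrary: r s rule: less_induct)
  case less
  have e1: "game_le (canon s) (canon l) \<longleftrightarrow> s \<le> l" if "l \<in> set (lvals r)" for l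
    using less.hyps[of s l] size_lcanon[OF less.prems(1) that] lvals_props[OF less.prems(1) that]
      less.prems by simp
  have e2: "game_le (canon u) (canon r) \<longleftrightarrow> u \<le> r" if "u \<in> set (rvals s)" for u
    using less.hyps[of u r] size_rcanon[OF less.prems(2) that] rvals_props[OF less.prems(2) that]
      less.prems by simp
  have "game_le (canon r) (canon s) \<longleftrightarrow>
     (\<forall>l\<in>set (lvals r). \<not> s \<le> l) \<and> (\<forall>u\<in>set (rvals s). \<not> u \<le> r)"
    using e1 e2 by (subst le_iff) (simp add: lo_canon ro_canon less.prems)
  also have "\<dots> \<longleftrightarrow> r \<le> s"
  proof
    assume a: "(\<forall>l\<in>set (lvals r). \<not> s \<le> l) \<and> (\<forall>u\<in>set (rvals s). \<not> u \<le> r)"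
    show "r \<le> s"
    proof (rule ccontr)
      assume "\<not> r \<le> s"
      then have "s < r" by simp
      from noninterleave[OF less.prems this] a show False by blast
    qed
  next
    assume rs: "r \<le> s"
    show "(\<forall>l\<in>set (lvals r). \<not> s \<le> l) \<and> (\<forall>u\<in>set (rvals s). \<not> u \<le> r)"
      using rs lvals_props(2)[OF less.prems(1)] rvals_props(2)[OF less.prems(2)] by fastforce
  qed
  finally show ?case .
qed



lemma dyadic_add: assumes "is_dyadic r" "is_dyadic s"
  shows "is_dyadic (r + s)" "is_dyadic (r - s)"
proof -
  obtain k j where k: "In k r" and j: "In j s" using assms dyadic_In by blast
  obtain b where b: "r = of_int b / 2 ^ (k + j)" using In_mono[OF k, of "k + j"] by (auto simp: In_def)
  obtain c where c: "s = of_int c / 2 ^ (k + j)" using In_mono[OF j, of "k + j"] by (auto simp: In_def)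
  have "r + s = of_int (b + c) / 2 ^ (k + j)" using b c by (simp add: add_divide_distrib)
  then show "is_dyadic (r + s)" unfolding is_dyadic_def by blast
  have "r - s = of_int (b - c) / 2 ^ (k + j)" using b c by (simp add: diff_divide_distrib)
  then show "is_dyadic (r - s)" unfolding is_dyadic_def by blast
qed

lemma simp_eq:
  assumes x: "is_dyadic x" and y: "is_dyadic y" and w: "is_dyadic w"
    and xw: "x < w" and wy: "w < y"
    and opts: "\<forall>l\<in>set (lvals w) \<union> set (rvals w). \<not> (x < l \<and> l < y)"
  shows "game_le (G [canon x] [canon y]) (canon w) \<and> game_le (canon w) (G [canon x] [canon y])"
proof
  let ?g = "G [canon x] [canon y]"
  show "game_le ?g (canon w)"
  proof (subst le_iff, intro conjI ballI notI)
    fix z assume "z \<in> set (lo ?g)" "game_le (canon w) z"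
    then have "game_le (canon w) (canon x)" by simp
    then show False using VC[OF w x] xw by simp
  next
    fix z assume z: "z \<in> set (ro (canon w))" and zg: "game_le z ?g"
    then obtain u where u: "u \<in> set (rvals w)" "z = canon u" using ro_canon[OF w] by auto
    have ud: "is_dyadic u" "w < u" using rvals_props[OF w u(1)] by auto
    have "\<not> game_le (canon y) z" using zg by (subst (asm) le_iff) simp
    then have "u < y" using VC[OF y ud(1)] u(2) by simp
    then show False using opts u(1) ud xw by auto
  qed
next
  let ?g = "G [canon x] [canon y]"
  show "game_le (canon w) ?g"
  proof (subst le_iff, intro conjI ballI notI)
    fix z assume "z \<in> set (ro ?g)" "game_le z (canon w)"
    then have "game_le (canon y) (canon w)" by simp
    then show False using VC[OF y w] wy by simp
  next
    fix z assume z: "z \<in> set (lo (canon w))" and zg: "game_le ?g z"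
    then obtain u where u: "u \<in> set (lvals w)" "z = canon u" using lo_canon[OF w] by auto
    have ud: "is_dyadic u" "u < w" using lvals_props[OF w u(1)] by auto
    have "\<not> game_le z (canon x)" using zg by (subst (asm) le_iff) simp
    then have "x < u" using VC[OF ud(1) x] u(2) by simp
    then show False using opts u(1) ud wy by auto
  qed
qed

lemma descent:
  assumes closed: "\<forall>r l. P r \<longrightarrow> is_dyadic r \<longrightarrow> l \<in> set (lvals r) \<union> set (rvals r) \<longrightarrow> P l"
  shows "P r \<Longrightarrow> is_dyadic r \<Longrightarrow> x < r \<Longrightarrow> r < y \<Longrightarrow>
    \<exists>w. P w \<and> is_dyadic w \<and> x < w \<and> w < y \<and> (\<forall>l\<in>set (lvals w) \<union> set (rvals w). \<not> (x < l \<and> l < y))"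
proof (induction "size (canon r)" arbitrary: r rule: less_induct)
  case less
  show ?case
  proof (cases "\<forall>l\<in>set (lvals r) \<union> set (rvals r). \<not> (x < l \<and> l < y)")
    case True
    then show ?thesis using less.prems by blast
  next
    case False
    then obtain l where l: "l \<in> set (lvals r) \<union> set (rvals r)" "x < l" "l < y" by blast
    have "size (canon l) < size (canon r)" "is_dyadic l"
      using l(1) size_lcanon[OF less.prems(2)] size_rcanon[OF less.prems(2)]
        lvals_props(1)[OF less.prems(2)] rvals_props(1)[OF less.prems(2)] by auto
    moreover have "P l" using closed less.prems(1,2) l(1) by blast
    ultimately show ?thesis using less.hyps[of l] l by blast
  qed
qed

lemma finL:
  assumes m: "is_dyadic m" and w: "is_dyadic w" and l: "l \<in> set (lvals m)" and wl: "w \<le> l"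
    and gw: "game_le g (canon w)"
  shows "\<not> game_le (game_add (canon m) (canon m)) (game_add g g)"
proof
  assume a: "game_le (game_add (canon m) (canon m)) (game_add g g)"
  have ld: "is_dyadic l" "l < m" using lvals_props[OF m l] by auto
  have "game_le (canon w) (canon l)" using VC[OF w ld(1)] wl by simp
  then have gl: "game_le g (canon l)" using gw le_trans by blast
  have "game_le (canon l) (canon m)" using VC[OF ld(1) m] ld(2) by simp
  then have gm: "game_le g (canon m)" using gl le_trans by blast
  have "game_le (game_add g g) (game_add (canon l) g)" using mono_R gl by blast
  moreover have "game_le (game_add (canon l) g) (game_add (canon l) (canon m))" using mono_L gm by blast
  ultimately have b: "game_le (game_add g g) (game_add (canon l) (canon m))" using le_trans by blast
  have "game_add (canon l) (canon m) \<in> set (lo (game_add (canon m) (canon m)))"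
    using l by (simp add: lo_add lo_canon[OF m])
  then show False using a b by (subst (asm) le_iff) blast
qed

lemma finR:
  assumes m: "is_dyadic m" and w: "is_dyadic w" and u: "u \<in> set (rvals m)" and wu: "u \<le> w"
    and gw: "game_le (canon w) g"
  shows "\<not> game_le (game_add g g) (game_add (canon m) (canon m))"
proof
  assume a: "game_le (game_add g g) (game_add (canon m) (canon m))"
  have ud: "is_dyadic u" "m < u" using rvals_props[OF m u] by auto
  have "game_le (canon u) (canon w)" using VC[OF ud(1) w] wu by simp
  then have ug: "game_le (canon u) g" using gw le_trans by blast
  have "game_le (canon m) (canon u)" using VC[OF m ud(1)] ud(2) by simp
  then have mg: "game_le (canon m) g" using ug le_trans by blast
  have "game_le (game_add (canon m) (canon u)) (game_add (canon m) g)" using mono_L ug by blast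
  moreover have "game_le (game_add (canon m) g) (game_add g g)" using mono_R mg by blast
  ultimately have b: "game_le (game_add (canon m) (canon u)) (game_add g g)" using le_trans by blast
  have "game_add (canon m) (canon u) \<in> set (ro (game_add (canon m) (canon m)))"
    using u by (simp add: ro_add ro_canon[OF m])
  then show False using a b by (subst (asm) le_iff) blast
qed



theorem proposition2p10:
  fixes m \<Delta> :: rat and a :: int and p :: nat
  assumes "m = of_int a / 2 ^ p"
    and "m \<noteq> 0"
    and "odd a \<or> p = 0"
    and "is_dyadic \<Delta>"
    and "is_number (ball m \<Delta>)"
    and "balanced m \<Delta>"
  shows "- 1 / 2 ^ p \<le> \<Delta> \<and> \<Delta> < 0"
proof -
  note mdef = assms(1)
  define x where "x = m + \<Delta>"
  define y where "y = m - \<Delta>"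
  define g where "g = G [canon x] [canon y]"
  have md: "is_dyadic m" using mdef by (auto simp: is_dyadic_def)
  have xd: "is_dyadic x" "is_dyadic y" using dyadic_add[OF md assms(4)] x_def y_def by auto
  have bg: "ball m \<Delta> = g" by (simp add: ball_def g_def x_def y_def)
  have num: "game_less (canon x) g" "game_less g (canon y)"
    using assms(5) by (auto simp: bg g_def is_number_def)
  have bal: "game_le (game_add g g) (game_add (canon m) (canon m))"
            "game_le (game_add (canon m) (canon m)) (game_add g g)"
    using assms(6) by (auto simp: balanced_def game_eq_def bg)
  have neg: "\<Delta> < 0"
  proof (rule ccontr)
    assume "\<not> \<Delta> < 0"
    then have "y \<le> x" by (simp add: x_def y_def)
    then have "game_le (canon y) (canon x)" using VC[OF xd(2) xd(1)] by simp
    moreover have "game_le g (canon y)" using num(2) by (simp add: game_less_def)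
    ultimately have "game_le g (canon x)" using le_trans by blast
    then show False using num(1) by (simp add: game_less_def)
  qed
  have xy: "x < y" using neg by (simp add: x_def y_def)
  have low: "- 1 / 2 ^ p \<le> \<Delta>"
  proof (rule ccontr)
    assume "\<not> - 1 / 2 ^ p \<le> \<Delta>"
    then have D: "\<Delta> < - 1 / 2 ^ p" by simp
    have hx: "x < m - 1 / 2 ^ p" using D by (simp add: x_def)
    have hy: "m + 1 / 2 ^ p < y" using D by (simp add: y_def)
    show False
    proof (cases "p = 0")
      case False
      then have odd: "odd a" using assms(3) by simp
      obtain q where q: "p = Suc q" using False not0_implies_Suc by blast
      have ep: "dyadic_exp m = p" using mdef dexp_of_odd[OF odd] by simp
      have lv: "lvals m = [m - 1 / 2 ^ p]" using False ep by (simp add: lvals_def)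
      have rv: "rvals m = [m + 1 / 2 ^ p]" using False ep by (simp add: rvals_def)
      define P where "P = In q"
      have closed: "P l" if Pr: "P r" "is_dyadic r" "l \<in> set (lvals r) \<union> set (rvals r)" for r l
      proof -
        have "dyadic_exp r \<le> q" using that(1) dexp_le P_def by simp
        moreover have "In (dyadic_exp r) l" using that(3) lvals_props(3)[OF that(2)] rvals_props(3)[OF that(2)] by auto
        ultimately show ?thesis using In_mono P_def by blast
      qed
      have cl: "\<forall>r l. P r \<longrightarrow> is_dyadic r \<longrightarrow> l \<in> set (lvals r) \<union> set (rvals r) \<longrightarrow> P l"
        using closed by blast
      obtain d where d: "a = 2 * d + 1" using odd oddE by blast
      have r0: "m - 1 / 2 ^ p = of_int d / 2 ^ q" using mdef d q by (simp add: field_simps)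
      have P0: "P (m - 1 / 2 ^ p)" using r0 by (auto simp: P_def In_def)
      have r0d: "is_dyadic (m - 1 / 2 ^ p)" using r0 by (auto simp: is_dyadic_def)
      have "m - 1 / 2 ^ p < y" 
      proof -
        have "(0::rat) < 1 / 2 ^ p" by simp
        then show ?thesis using hy by linarith
      qed
      then obtain w where w: "P w" "is_dyadic w" "x < w" "w < y"
        "\<forall>l\<in>set (lvals w) \<union> set (rvals w). \<not> (x < l \<and> l < y)"
        using descent[of P, OF cl P0 r0d hx] by blast
      have sw: "game_le g (canon w) \<and> game_le (canon w) g"
        using simp_eq[OF xd w(2) w(3) w(4) w(5)] by (simp add: g_def)
      obtain c where c: "w = of_int c / 2 ^ q" using w(1) by (auto simp: P_def In_def)
      have wc: "w = of_int (2 * c) / 2 ^ p" using c q by simp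
      have "w \<le> m - 1 / 2 ^ p \<or> m + 1 / 2 ^ p \<le> w"
      proof (rule ccontr)
        assume "\<not> (w \<le> m - 1 / 2 ^ p \<or> m + 1 / 2 ^ p \<le> w)"
        then have h: "of_int (a - 1) / 2 ^ p < (of_int (2 * c) / 2 ^ p :: rat)"
                  "(of_int (2 * c) / 2 ^ p :: rat) < of_int (a + 1) / 2 ^ p"
          using wc mdef by (auto simp: diff_divide_distrib add_divide_distrib)
        have "a - 1 < 2 * c" "2 * c < a + 1"
          using h by (simp_all only: divide_less_cancel zero_less_power, simp_all)
        then have "a = 2 * c" by simp
        then show False using odd by simp
      qed
      then show False
      proof
        assume "w \<le> m - 1 / 2 ^ p"
        then show False using finL[OF md w(2), of "m - 1 / 2 ^ p" g] lv sw bal by simp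
      next
        assume "m + 1 / 2 ^ p \<le> w"
        then show False using finR[OF md w(2), of "m + 1 / 2 ^ p" g] rv sw bal by simp
      qed
    next
      case True
      then have ma: "m = of_int a" using mdef by simp
      have a0: "a \<noteq> 0" using assms(2) ma by simp
      have ep: "dyadic_exp m = 0" using ma dexp_int by simp
      have hx': "x < of_int a - 1" "of_int a + 1 < y" using hx hy True ma by auto
      show False
      proof (cases "a > 0")
        case True
        have lv: "lvals m = [m - 1]" using True ep ma by (simp add: lvals_def)
        define P where "P (r::rat) \<longleftrightarrow> (\<exists>n. r = of_int n \<and> 0 \<le> n \<and> n \<le> a - 1)" for r
        have closed: "P l" if Pr: "P r" "is_dyadic r" "l \<in> set (lvals r) \<union> set (rvals r)" for r l
        proof -
          obtain n where n: "r = of_int n" "0 \<le> n" "n \<le> a - 1" using Pr(1) by (auto simp: P_def)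
          have "dyadic_exp r = 0" using n(1) dexp_int by simp
          then have "l = r - 1" "n > 0" using that(3) n by (auto simp: lvals_def rvals_def split: if_splits)
          then show ?thesis using n unfolding P_def by (intro exI[of _ "n - 1"]) auto
        qed
        have cl: "\<forall>r l. P r \<longrightarrow> is_dyadic r \<longrightarrow> l \<in> set (lvals r) \<union> set (rvals r) \<longrightarrow> P l"
          using closed by blast
        have P0: "P (of_int (a - 1))" using True unfolding P_def by (intro exI[of _ "a - 1"]) auto
        have r0d: "is_dyadic (of_int (a - 1))" unfolding is_dyadic_def by (rule exI[of _ "a - 1"], rule exI[of _ 0]) simp
        have h1: "x < of_int (a - 1)" and h2: "of_int (a - 1) < y" using hx' by auto
        obtain w where w: "P w" "is_dyadic w" "x < w" "w < y"
          "\<forall>l\<in>set (lvals w) \<union> set (rvals w). \<not> (x < l \<and> l < y)"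
          using descent[of P, OF cl P0 r0d h1 h2] by blast
        have sw: "game_le g (canon w) \<and> game_le (canon w) g"
          using simp_eq[OF xd w(2) w(3) w(4) w(5)] by (simp add: g_def)
        have "w \<le> m - 1" using w(1) ma by (auto simp: P_def)
        then show False using finL[OF md w(2), of "m - 1" g] lv sw bal by simp
      next
        case False
        then have an: "a < 0" using a0 by simp
        have rv: "rvals m = [m + 1]" using an ep ma by (simp add: rvals_def)
        define P where "P (r::rat) \<longleftrightarrow> (\<exists>n. r = of_int n \<and> a + 1 \<le> n \<and> n \<le> 0)" for r
        have closed: "P l" if Pr: "P r" "is_dyadic r" "l \<in> set (lvals r) \<union> set (rvals r)" for r l
        proof -
          obtain n where n: "r = of_int n" "a + 1 \<le> n" "n \<le> 0" using Pr(1) by (auto simp: P_def)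
          have "dyadic_exp r = 0" using n(1) dexp_int by simp
          then have "l = r + 1" "n < 0" using that(3) n by (auto simp: lvals_def rvals_def split: if_splits)
          then show ?thesis using n unfolding P_def by (intro exI[of _ "n + 1"]) auto
        qed
        have cl: "\<forall>r l. P r \<longrightarrow> is_dyadic r \<longrightarrow> l \<in> set (lvals r) \<union> set (rvals r) \<longrightarrow> P l"
          using closed by blast
        have P0: "P (of_int (a + 1))" using an unfolding P_def by (intro exI[of _ "a + 1"]) auto
        have r0d: "is_dyadic (of_int (a + 1))" unfolding is_dyadic_def by (rule exI[of _ "a + 1"], rule exI[of _ 0]) simp
        have h1: "x < of_int (a + 1)" and h2: "of_int (a + 1) < y" using hx' by auto
        obtain w where w: "P w" "is_dyadic w" "x < w" "w < y"
          "\<forall>l\<in>set (lvals w) \<union> set (rvals w). \<not> (x < l \<and> l < y)"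
          using descent[of P, OF cl P0 r0d h1 h2] by blast
        have sw: "game_le g (canon w) \<and> game_le (canon w) g"
          using simp_eq[OF xd w(2) w(3) w(4) w(5)] by (simp add: g_def)
        have "m + 1 \<le> w" using w(1) ma by (auto simp: P_def)
        then show False using finR[OF md w(2), of "m + 1" g] rv sw bal by simp
      qed
    qed
  qed
  show ?thesis using low neg by simp
qed

end
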